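(* Let $p\in\mathbb{T}^{\mathcal{P}([n])}$ be a tropical Wick vector with nonempty support, and let $M$ be the even $\Delta$-matroid whose collection of bases is $\operatorname{supp}(p)$. Then: (i) if $x\in\mathcal{C}(p)^\top$ has nonempty support, then $\operatorname{supp}(x)$ is a dependent subset in $M^*$; (ii) the cocycles of $p$ having minimal nonempty support (with respect to inclusion) are exactly the cocircuits of $p$; (iii) for any two cocircuits $c^*_1,c^*_2$ of $p$ with the same support there is $\lambda\in\mathbb{R}$ with $c^*_1=c^*_2+\lambda\mathbf{1}$.
   Context: $\mathbb{T}=\mathbb{R}\cup\{\infty\}$; $\mathcal{P}([n])$ the set of subsets of $[n]$. A tropical Wick vector is $p\in\mathbb{T}^{\mathcal{P}([n])}$ such that for all $S,T\subseteq[n]$ the minimum $\min_{i\in S\Delta T}(p_{S\Delta\{i\}}+p_{T\Delta\{i\}})$ is attained at least twice or equals $\infty$; $\operatorname{supp}(p)=\{S:p_S\ne\infty\}$, which (when nonempty) is the set of bases of an even $\Delta$-matroid $M$ on $[n]$. The dual $M^*$ has bases $\{[n]\setminus B: B \text{ a basis of } M\}$. Let $\mathcal{J}=\{1,\dots,n,1^*,\dots,n^*\}$ with involution $i\leftrightarrow i^*$ ($i^{**}=i$); $X\subseteq\mathcal{J}$ is admissible if $X\cap X^*=\emptyset$. For $S\subseteq[n]$ let $\bar S=S\cup\{i^*:i\in[n]\setminus S\}$, and $\bar p_{\bar S}:=p_S$. A subset $X\subseteq\mathcal{J}$ is dependent in $M^*$ if it is not contained in $\bar B$ for any basis $B$ of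 $M^*$. For $T\subseteq[n]$ define $c_T, c^*_T\in\mathbb{T}^{\mathcal{J}}$ by $(c_T)_i=\bar p_{\bar T\Delta\{i,i^*\}}$ if $i\in\bar T$, $\infty$ otherwise; $(c^*_T)_i=\bar p_{\bar T\Delta\{i,i^*\}}$ if $i\notin\bar T$, $\infty$ otherwise. Circuits of $p$: vectors $c_T+\lambda\mathbf{1}$, $\lambda\in\mathbb{R}$, with nonempty support; $\mathcal{C}(p)$ is the set of circuits. Cocircuits of $p$: vectors $c^*_T+\lambda\mathbf{1}$ with nonempty support. Here the support of a vector in $\mathbb{T}^{\mathcal{J}}$ is the set of coordinates $\neq\infty$. $x,y$ are tropically orthogonal if $\min_k(x_k+y_k)$ is attained at least twice or equals $\infty$; $\mathcal{C}(p)^\top$ is the set of vectors tropically orthogonal to all circuits. A vector is admissible if its support is admissible; a cocycle of $p$ is an admissible vector in $\mathcal{C}(p)^\top$. *)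

theory Defs
  imports "HOL-Library.Extended_Real"
begin

text \<open>Tropical numbers T = R \<union> {\<infinity>} are modelled by ereal values different from -\<infinity>.  The doubled ground set J = {1..n,1*..n*} is modelled as
  pairs (i,b) with i \<in> {1..n}; (i,False) is i and (i,True) is i*.\<close>

definition symdiff :: "'a set \<Rightarrow> 'a set \<Rightarrow> 'a set" (infixl "\<Delta>" 65) where
  "A \<Delta> B = (A - B) \<union> (B - A)"

type_synonym jelt = "nat \<times> bool"

definition ground :: "nat \<Rightarrow> nat set" where
  "ground n = {1..n}"

definition Jset :: "nat \<Rightarrow> jelt set" where
  "Jset n = {1..n} \<times> (UNIV :: bool set)"

definition star :: "jelt \<Rightarrow> jelt" where
  "star k = (fst k, \<not> snd k)"

definition admissible :: "jelt set \<Rightarrow> bool" where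
  "admissible X \<longleftrightarrow> X \<inter> star ` X = {}"

definition min_twice :: "('a \<Rightarrow> ereal) \<Rightarrow> 'a set \<Rightarrow> bool" where
  "min_twice f A \<longleftrightarrow> (\<forall>i\<in>A. f i = \<infinity>) \<or>
     (\<exists>i\<in>A. \<exists>j\<in>A. i \<noteq> j \<and> f i = f j \<and> (\<forall>k\<in>A. f i \<le> f k))"

definition tropical_wick :: "nat \<Rightarrow> (nat set \<Rightarrow> ereal) \<Rightarrow> bool" where
  "tropical_wick n p \<longleftrightarrow> (\<forall>S. S \<subseteq> ground n \<longrightarrow> p S \<noteq> -\<infinity>) \<and>
     (\<forall>S T. S \<subseteq> ground n \<longrightarrow> T \<subseteq> ground n \<longrightarrow>
        min_twice (\<lambda>i. p (S \<Delta> {i}) + p (T \<Delta> {i})) (S \<Delta> T))"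

definition psupp :: "nat \<Rightarrow> (nat set \<Rightarrow> ereal) \<Rightarrow> nat set set" where
  "psupp n p = {S. S \<subseteq> ground n \<and> p S \<noteq> \<infinity>}"

definition dual_bases :: "nat \<Rightarrow> nat set set \<Rightarrow> nat set set" where
  "dual_bases n B = (\<lambda>X. ground n - X) ` B"

definition bar :: "nat \<Rightarrow> nat set \<Rightarrow> jelt set" where
  "bar n S = {(i, False) | i. i \<in> S} \<union> {(i, True) | i. i \<in> ground n - S}"

definition barp :: "(nat set \<Rightarrow> ereal) \<Rightarrow> jelt set \<Rightarrow> ereal" where
  "barp p X = p {i. (i, False) \<in> X}"

definition dependent_in :: "nat \<Rightarrow> nat set set \<Rightarrow> jelt set \<Rightarrow> bool" where
  "dependent_in n B X \<longleftrightarrow> X \<subseteq> Jset n \<and> \<not> (\<exists>b\<in>B. X \<subseteq> bar n b)"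

definition tvec :: "nat \<Rightarrow> (jelt \<Rightarrow> ereal) \<Rightarrow> bool" where
  "tvec n x \<longleftrightarrow> (\<forall>k. x k \<noteq> -\<infinity>) \<and> (\<forall>k. k \<notin> Jset n \<longrightarrow> x k = \<infinity>)"

definition vsupp :: "nat \<Rightarrow> (jelt \<Rightarrow> ereal) \<Rightarrow> jelt set" where
  "vsupp n x = {k \<in> Jset n. x k \<noteq> \<infinity>}"

definition cvec :: "nat \<Rightarrow> (nat set \<Rightarrow> ereal) \<Rightarrow> nat set \<Rightarrow> jelt \<Rightarrow> ereal" where
  "cvec n p T k = (if k \<in> Jset n \<and> k \<in> bar n T
                   then barp p (bar n T \<Delta> {k, star k}) else \<infinity>)"

definition cocvec :: "nat \<Rightarrow> (nat set \<Rightarrow> ereal) \<Rightarrow> nat set \<Rightarrow> jelt \<Rightarrow> ereal" where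
  "cocvec n p T k = (if k \<in> Jset n \<and> k \<notin> bar n T
                   then barp p (bar n T \<Delta> {k, star k}) else \<infinity>)"

definition shift :: "(jelt \<Rightarrow> ereal) \<Rightarrow> real \<Rightarrow> jelt \<Rightarrow> ereal" where
  "shift x l k = x k + ereal l"

definition circuits :: "nat \<Rightarrow> (nat set \<Rightarrow> ereal) \<Rightarrow> (jelt \<Rightarrow> ereal) set" where
  "circuits n p = {shift (cvec n p T) l | T l. T \<subseteq> ground n \<and>
                     vsupp n (shift (cvec n p T) l) \<noteq> {}}"

definition cocircuits :: "nat \<Rightarrow> (nat set \<Rightarrow> ereal) \<Rightarrow> (jelt \<Rightarrow> ereal) set" where
  "cocircuits n p = {shift (cocvec n p T) l | T l. T \<subseteq> ground n \<and>
                     vsupp n (shift (cocvec n p T) l) \<noteq> {}}"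

definition trop_orth :: "nat \<Rightarrow> (jelt \<Rightarrow> ereal) \<Rightarrow> (jelt \<Rightarrow> ereal) \<Rightarrow> bool" where
  "trop_orth n x y \<longleftrightarrow> min_twice (\<lambda>k. x k + y k) (Jset n)"

definition circ_perp :: "nat \<Rightarrow> (nat set \<Rightarrow> ereal) \<Rightarrow> (jelt \<Rightarrow> ereal) set" where
  "circ_perp n p = {x. tvec n x \<and> (\<forall>c\<in>circuits n p. trop_orth n x c)}"

definition cocycles :: "nat \<Rightarrow> (nat set \<Rightarrow> ereal) \<Rightarrow> (jelt \<Rightarrow> ereal) set" where
  "cocycles n p = {x \<in> circ_perp n p. admissible (vsupp n x)}"

end

theory Submission imports Defs begin

lemma bar_mem: "S \<subseteq> ground n \<Longrightarrow> k \<in> Jset n \<Longrightarrow> (k \<in> bar n S) \<longleftrightarrow> (snd k \<longleftrightarrow> fst k \<notin> S)"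
  by (cases k) (auto simp: bar_def Jset_def ground_def)

lemma barp_swap: "S \<subseteq> ground n \<Longrightarrow> barp p (bar n S \<Delta> {k, star k}) = p (S \<Delta> {fst k})"
  unfolding barp_def
  apply (rule arg_cong[where f=p])
  apply (cases k) apply (auto simp: bar_def symdiff_def star_def ground_def)
  done

lemma cvec_eq: "S \<subseteq> ground n \<Longrightarrow> cvec n p S k = (if k \<in> Jset n \<and> (snd k \<longleftrightarrow> fst k \<notin> S) then p (S \<Delta> {fst k}) else \<infinity>)"
  by (auto simp add: cvec_def bar_mem barp_swap)

lemma cocvec_eq: "S \<subseteq> ground n \<Longrightarrow> cocvec n p S k = (if k \<in> Jset n \<and> (snd k \<longleftrightarrow> fst k \<in> S) then p (S \<Delta> {fst k}) else \<infinity>)"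
  by (auto simp add: cocvec_def bar_mem barp_swap)

lemma Jset_mem: "k \<in> Jset n \<longleftrightarrow> fst k \<in> ground n"
  by (cases k) (auto simp: Jset_def ground_def)

lemma symdiff_sub: "S \<subseteq> ground n \<Longrightarrow> i \<in> ground n \<Longrightarrow> S \<Delta> {i} \<subseteq> ground n"
  by (auto simp: symdiff_def)

lemma vsupp_shift: "vsupp n (shift c l) = vsupp n c"
  by (auto simp: vsupp_def shift_def)

lemma shift_shift: "shift (shift c a) b = shift c (a + b)"
  by (auto simp: shift_def fun_eq_iff add.assoc)

lemma shift0: "shift c 0 = c"
  by (auto simp: shift_def fun_eq_iff zero_ereal_def[symmetric])

lemma min_twice_one:
  assumes "a \<in> A" "f a \<noteq> \<infinity>" "\<forall>m\<in>A - {a}. f m = \<infinity>"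
  shows "\<not> min_twice f A"
proof
  assume "min_twice f A"
  moreover have "\<not> (\<forall>i\<in>A. f i = \<infinity>)" using assms(1,2) by blast
  ultimately obtain i j where ij: "i \<in> A" "j \<in> A" "i \<noteq> j" "f i = f j" "\<forall>k\<in>A. f i \<le> f k"
    unfolding min_twice_def by blast
  have "f i \<le> f a" using ij(5) assms(1) by blast
  hence fi: "f i \<noteq> \<infinity>" using assms(2) by (metis ereal_infty_less_eq(1))
  hence "i = a" using assms(3) ij(1) by blast
  moreover have "j = a" using fi ij(4) assms(3) ij(2) by auto
  ultimately show False using ij(3) by simp
qed

lemma min_twice_two:
  assumes "min_twice f A" "a \<in> A" "b \<in> A" "a \<noteq> b" "f a \<noteq> \<infinity>" "\<forall>m\<in>A - {a,b}. f m = \<infinity>"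
  shows "f b \<noteq> \<infinity> \<and> f a = f b"
proof -
  from assms(1,2,5) obtain i j where ij: "i \<in> A" "j \<in> A" "i \<noteq> j" "f i = f j" "\<forall>k\<in>A. f i \<le> f k"
    unfolding min_twice_def by blast
  have "f i \<le> f a" using ij(5) assms(2) by blast
  hence fi: "f i \<noteq> \<infinity>" using assms(5) by (metis ereal_infty_less_eq(1))
  have "i \<in> {a,b}" using fi assms(6) ij(1) by blast
  moreover have "j \<in> {a,b}" using fi ij(4) assms(6) ij(2) by auto
  ultimately show ?thesis using ij(3,4) fi by auto
qed

lemma symdiff_twice: "(A \<Delta> B) \<Delta> B = A"
  by (auto simp: symdiff_def)

lemma circ_mem: "S \<subseteq> ground n \<Longrightarrow> vsupp n (cvec n p S) \<noteq> {} \<Longrightarrow> cvec n p S \<in> circuits n p"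
  unfolding circuits_def by (rule CollectI, rule exI[of _ S], rule exI[of _ 0]) (simp add: shift0)

lemma cocirc_mem: "S \<subseteq> ground n \<Longrightarrow> vsupp n (cocvec n p S) \<noteq> {} \<Longrightarrow> shift (cocvec n p S) l \<in> cocircuits n p"
  unfolding cocircuits_def by (auto simp: vsupp_shift)

lemma cvec_nm:
  assumes pne: "\<forall>S. S \<subseteq> ground n \<longrightarrow> p S \<noteq> -\<infinity>" and SG: "S \<subseteq> ground n"
  shows "cvec n p S m \<noteq> -\<infinity>" "cocvec n p S m \<noteq> -\<infinity>"
proof -
  have "m \<in> Jset n \<Longrightarrow> p (S \<Delta> {fst m}) \<noteq> -\<infinity>"
    using pne symdiff_sub[OF SG] Jset_mem by blast
  thus "cvec n p S m \<noteq> -\<infinity>" "cocvec n p S m \<noteq> -\<infinity>"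
    by (auto simp: cvec_eq[OF SG] cocvec_eq[OF SG])
qed

lemma part1_core:
  assumes x: "x \<in> circ_perp n p" and pne: "\<forall>S. S \<subseteq> ground n \<longrightarrow> p S \<noteq> -\<infinity>"
    and X: "vsupp n x \<noteq> {}" and A: "A \<in> psupp n p"
  shows "\<exists>k\<in>vsupp n x. (snd k \<longleftrightarrow> fst k \<notin> A)"
proof (rule ccontr)
  assume H: "\<not> ?thesis"
  from X obtain k where k: "k \<in> vsupp n x" by blast
  define i where "i = fst k"
  define S where "S = A \<Delta> {i}"
  have kJ: "k \<in> Jset n" and xk: "x k \<noteq> \<infinity>" using k by (auto simp: vsupp_def)
  have iG: "i \<in> ground n" using kJ Jset_mem i_def by blast
  have AG: "A \<subseteq> ground n" and pA: "p A \<noteq> \<infinity>" using A by (auto simp: psupp_def)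
  have SG: "S \<subseteq> ground n" using AG iG S_def symdiff_sub by blast
  have tv: "tvec n x" and orth: "\<forall>c\<in>circuits n p. trop_orth n x c" using x by (auto simp: circ_perp_def)
  have hk: "snd k \<longleftrightarrow> fst k \<in> A" using H k by blast
  have c1: "(snd k \<longleftrightarrow> fst k \<notin> S)" using hk by (auto simp: S_def i_def symdiff_def)
  have "cvec n p S k = p (S \<Delta> {fst k})" by (simp add: cvec_eq[OF SG] c1 kJ)
  hence cSk: "cvec n p S k = p A" by (simp add: S_def i_def symdiff_twice)
  have "k \<in> vsupp n (cvec n p S)" using cSk pA kJ by (simp add: vsupp_def)
  hence "cvec n p S \<in> circuits n p" using circ_mem[OF SG] by blast
  hence "min_twice (\<lambda>m. x m + cvec n p S m) (Jset n)" using orth by (simp add: trop_orth_def)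
  moreover have "\<not> min_twice (\<lambda>m. x m + cvec n p S m) (Jset n)"
  proof (rule min_twice_one[OF kJ])
    have "x k \<noteq> -\<infinity>" using tv unfolding tvec_def by blast
    moreover have "p A \<noteq> -\<infinity>" using pne AG by blast
    ultimately show "x k + cvec n p S k \<noteq> \<infinity>" using xk pA cSk by simp
    show "\<forall>m\<in>Jset n - {k}. x m + cvec n p S m = \<infinity>"
    proof
      fix m assume m: "m \<in> Jset n - {k}"
      have xm: "x m \<noteq> -\<infinity>" using tv unfolding tvec_def by blast
      have cm: "cvec n p S m \<noteq> -\<infinity>"
        using cvec_nm[OF pne SG] by blast
      show "x m + cvec n p S m = \<infinity>"
      proof (cases "m \<in> vsupp n x")
        case True
        hence hm: "snd m \<longleftrightarrow> fst m \<in> A" using H by blast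
        have "cvec n p S m = \<infinity>"
        proof (rule ccontr)
          assume "cvec n p S m \<noteq> \<infinity>"
          hence "snd m \<longleftrightarrow> fst m \<notin> S" by (auto simp: cvec_eq[OF SG] split: if_splits)
          hence "fst m = i" using hm by (auto simp: S_def symdiff_def split: if_splits)
          hence "m = k" using hm hk i_def by (cases m, cases k) auto
          thus False using m by blast
        qed
        thus ?thesis using xm by simp
      next
        case False
        hence "x m = \<infinity>" using m by (auto simp: vsupp_def)
        thus ?thesis using cm by simp
      qed
    qed
  qed
  ultimately show False by blast
qed

lemma part1:
  assumes x: "x \<in> circ_perp n p" and pne: "\<forall>S. S \<subseteq> ground n \<longrightarrow> p S \<noteq> -\<infinity>"
    and X: "vsupp n x \<noteq> {}"
  shows "dependent_in n (dual_bases n (psupp n p)) (vsupp n x)"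
  unfolding dependent_in_def
proof
  show "vsupp n x \<subseteq> Jset n" by (auto simp: vsupp_def)
  show "\<not> (\<exists>b\<in>dual_bases n (psupp n p). vsupp n x \<subseteq> bar n b)"
  proof
    assume "\<exists>b\<in>dual_bases n (psupp n p). vsupp n x \<subseteq> bar n b"
    then obtain A where A: "A \<in> psupp n p" and sub: "vsupp n x \<subseteq> bar n (ground n - A)"
      by (auto simp: dual_bases_def)
    obtain k where k: "k \<in> vsupp n x" "snd k \<longleftrightarrow> fst k \<notin> A" using part1_core[OF x pne X A] by blast
    have kJ: "k \<in> Jset n" using k by (auto simp: vsupp_def)
    have "k \<in> bar n (ground n - A)" using sub k by blast
    hence "snd k \<longleftrightarrow> fst k \<notin> ground n - A" using bar_mem[of "ground n - A" n k] kJ by blast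
    thus False using k(2) kJ by (auto simp: Jset_mem)
  qed
qed

lemma min_twice_transfer:
  fixes f :: "'a \<Rightarrow> ereal" and g :: "'b \<Rightarrow> ereal"
  assumes inj: "inj_on h B" and hB: "h ` B \<subseteq> A" and fg: "\<forall>b\<in>B. f (h b) = g b + ereal c"
    and out: "\<forall>a\<in>A - h ` B. f a = \<infinity>"
  shows "min_twice f A \<longleftrightarrow> min_twice g B"
proof -
  have inf: "\<And>b. b \<in> B \<Longrightarrow> f (h b) = \<infinity> \<longleftrightarrow> g b = \<infinity>" using fg by (cases "g b") auto
  have le: "\<And>b b'. b \<in> B \<Longrightarrow> b' \<in> B \<Longrightarrow> f (h b) \<le> f (h b') \<longleftrightarrow> g b \<le> g b'"
    using fg by (simp add: ereal_add_le_add_iff2)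
  have eq: "\<And>b b'. b \<in> B \<Longrightarrow> b' \<in> B \<Longrightarrow> f (h b) = f (h b') \<longleftrightarrow> g b = g b'"
    using fg by (simp add: ereal_add_cancel_right)
  show ?thesis
  proof
    assume "min_twice f A"
    then consider "\<forall>i\<in>A. f i = \<infinity>" | i j where "i\<in>A" "j\<in>A" "i \<noteq> j" "f i = f j" "\<forall>k\<in>A. f i \<le> f k"
      unfolding min_twice_def by blast
    then show "min_twice g B"
    proof cases
      case 1
      then show ?thesis using hB inf unfolding min_twice_def by blast
    next
      case 2
      show ?thesis
      proof (cases "f i = \<infinity>")
        case True
        hence "\<forall>k\<in>A. f k = \<infinity>" using 2 by (metis ereal_infty_less_eq(1))
        then show ?thesis using hB inf unfolding min_twice_def by blast
      next
        case False
        hence "i \<in> h ` B" "j \<in> h ` B" using out 2 by (metis DiffI)+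
        then obtain bi bj where b: "bi \<in> B" "bj \<in> B" "i = h bi" "j = h bj" by blast
        have "bi \<noteq> bj" "g bi = g bj" using b 2 eq by auto
        moreover have "\<forall>k\<in>B. g bi \<le> g k" using 2 b le hB by blast
        ultimately show ?thesis using b unfolding min_twice_def by blast
      qed
    qed
  next
    assume "min_twice g B"
    then consider "\<forall>i\<in>B. g i = \<infinity>" | i j where "i\<in>B" "j\<in>B" "i \<noteq> j" "g i = g j" "\<forall>k\<in>B. g i \<le> g k"
      unfolding min_twice_def by blast
    then show "min_twice f A"
    proof cases
      case 1
      have "\<forall>a\<in>A. f a = \<infinity>"
      proof
        fix a assume "a \<in> A"
        show "f a = \<infinity>"
        proof (cases "a \<in> h ` B")
          case True then show ?thesis using 1 inf by auto
        next
          case False then show ?thesis using out \<open>a \<in> A\<close> by blast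
        qed
      qed
      then show ?thesis unfolding min_twice_def by blast
    next
      case 2
      have "h i \<noteq> h j" using 2 inj by (meson inj_on_eq_iff)
      moreover have "f (h i) = f (h j)" using 2 eq by blast
      moreover have "\<forall>a\<in>A. f (h i) \<le> f a"
      proof
        fix a assume "a \<in> A"
        show "f (h i) \<le> f a"
        proof (cases "a \<in> h ` B")
          case True then show ?thesis using 2 le by auto
        next
          case False then show ?thesis using out \<open>a \<in> A\<close> by simp
        qed
      qed
      ultimately show ?thesis using 2 hB unfolding min_twice_def by blast
    qed
  qed
qed

lemma ereal_rearr: "((a::ereal) + ereal l) + (b + ereal l') = (a + b) + ereal (l + l')"
  by (cases a; cases b) auto

lemma wick_pne: "tropical_wick n p \<Longrightarrow> \<forall>S. S \<subseteq> ground n \<longrightarrow> p S \<noteq> -\<infinity>"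
  by (simp add: tropical_wick_def)

lemma wick_W:
  assumes "tropical_wick n p" "S \<subseteq> ground n" "T \<subseteq> ground n"
  shows "min_twice (\<lambda>i. p (S \<Delta> {i}) + p (T \<Delta> {i})) (S \<Delta> T)"
  using assms unfolding tropical_wick_def by blast

lemma coc_cocycle:
  assumes wick: "tropical_wick n p" and c: "c \<in> cocircuits n p"
  shows "c \<in> cocycles n p"
proof -
  have pne: "\<forall>S. S \<subseteq> ground n \<longrightarrow> p S \<noteq> -\<infinity>" using wick_pne[OF wick] .
  obtain T l where T: "T \<subseteq> ground n" and c: "c = shift (cocvec n p T) l"
    using c unfolding cocircuits_def by blast
  have tv: "tvec n c"
    unfolding tvec_def c shift_def
    using cvec_nm(2)[OF pne T] by (auto simp: cocvec_eq[OF T])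
  have adm: "admissible (vsupp n c)"
    unfolding admissible_def vsupp_shift c
  proof (rule ccontr)
    assume "vsupp n (cocvec n p T) \<inter> star ` vsupp n (cocvec n p T) \<noteq> {}"
    then obtain k m where "k \<in> vsupp n (cocvec n p T)" "m \<in> vsupp n (cocvec n p T)" "k = star m" by blast
    thus False by (auto simp: vsupp_def cocvec_eq[OF T] star_def split: if_splits)
  qed
  have orth: "\<forall>d\<in>circuits n p. trop_orth n c d"
  proof
    fix d assume "d \<in> circuits n p"
    then obtain S l' where S: "S \<subseteq> ground n" and d: "d = shift (cvec n p S) l'"
      unfolding circuits_def by blast
    have w: "min_twice (\<lambda>i. p (T \<Delta> {i}) + p (S \<Delta> {i})) (T \<Delta> S)"
      using wick_W[OF wick T S] .
    have TS: "T \<Delta> S \<subseteq> ground n" using T S by (auto simp: symdiff_def)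
    show "trop_orth n c d"
      unfolding trop_orth_def
    proof (subst min_twice_transfer[where h="\<lambda>i. (i, i \<in> T)" and B="T \<Delta> S"
          and g="\<lambda>i. p (T \<Delta> {i}) + p (S \<Delta> {i})" and c="l + l'"])
      show "inj_on (\<lambda>i. (i, i \<in> T)) (T \<Delta> S)" by (auto intro: inj_onI)
      show "(\<lambda>i. (i, i \<in> T)) ` (T \<Delta> S) \<subseteq> Jset n" using TS by (auto simp: Jset_mem)
      show "\<forall>b\<in>T \<Delta> S. c (b, b \<in> T) + d (b, b \<in> T) = p (T \<Delta> {b}) + p (S \<Delta> {b}) + ereal (l + l')"
      proof
        fix b assume b: "b \<in> T \<Delta> S"
        have bJ: "(b, b \<in> T) \<in> Jset n" using b TS by (auto simp: Jset_mem)
        have "(b \<in> T) = (b \<notin> S)" using b by (auto simp: symdiff_def)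
        hence "cvec n p S (b, b \<in> T) = p (S \<Delta> {b})" using bJ by (simp add: cvec_eq[OF S])
        moreover have "cocvec n p T (b, b \<in> T) = p (T \<Delta> {b})" using bJ by (simp add: cocvec_eq[OF T])
        ultimately show "c (b, b \<in> T) + d (b, b \<in> T) = p (T \<Delta> {b}) + p (S \<Delta> {b}) + ereal (l + l')"
          unfolding c d shift_def by (simp add: ereal_rearr)
      qed
      show "\<forall>a\<in>Jset n - (\<lambda>i. (i, i \<in> T)) ` (T \<Delta> S). c a + d a = \<infinity>"
      proof
        fix a assume a: "a \<in> Jset n - (\<lambda>i. (i, i \<in> T)) ` (T \<Delta> S)"
        have "cocvec n p T a = \<infinity> \<or> cvec n p S a = \<infinity>"
        proof (rule ccontr)
          assume "\<not> ?thesis"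
          hence h: "snd a \<longleftrightarrow> fst a \<in> T" "snd a \<longleftrightarrow> fst a \<notin> S"
            by (auto simp: cocvec_eq[OF T] cvec_eq[OF S] split: if_splits)
          hence "fst a \<in> T \<Delta> S" by (auto simp: symdiff_def)
          moreover have "a = (fst a, fst a \<in> T)" using h by (cases a) auto
          ultimately show False using a by blast
        qed
        moreover have "cocvec n p T a \<noteq> -\<infinity>" "cvec n p S a \<noteq> -\<infinity>"
          using cvec_nm[OF pne T] cvec_nm[OF pne S] by auto
        ultimately show "c a + d a = \<infinity>" by (auto simp: c d shift_def)
      qed
      show "min_twice (\<lambda>i. p (T \<Delta> {i}) + p (S \<Delta> {i})) (T \<Delta> S)" using w .
    qed
  qed
  show ?thesis using tv adm orth by (simp add: cocycles_def circ_perp_def)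
qed

lemma finite_Jset: "finite (Jset n)"
  by (simp add: Jset_def)

lemma claimA:
  assumes wick: "tropical_wick n p" and ne: "psupp n p \<noteq> {}"
    and x: "x \<in> cocycles n p" and X: "vsupp n x \<noteq> {}"
  shows "\<exists>c\<in>cocircuits n p. vsupp n c \<subseteq> vsupp n x"
proof -
  have pne: "\<forall>S. S \<subseteq> ground n \<longrightarrow> p S \<noteq> -\<infinity>" using wick_pne[OF wick] .
  have xp: "x \<in> circ_perp n p" and adm: "admissible (vsupp n x)" using x by (auto simp: cocycles_def)
  define Q where "Q A = {k \<in> vsupp n x. snd k \<longleftrightarrow> fst k \<notin> A}" for A
  have finQ: "finite (Q A)" for A
    by (rule finite_subset[OF _ finite_Jset[of n]]) (auto simp: Q_def vsupp_def)
  from ne obtain A0 where "A0 \<in> psupp n p" by blast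
  then obtain A where A: "A \<in> psupp n p" and Amin: "\<forall>A'. A' \<in> psupp n p \<longrightarrow> card (Q A) \<le> card (Q A')"
    using ex_has_least_nat[of "\<lambda>A. A \<in> psupp n p" A0 "\<lambda>A. card (Q A)"] by blast
  have AG: "A \<subseteq> ground n" and pA: "p A \<noteq> \<infinity>" using A by (auto simp: psupp_def)
  obtain k where k: "k \<in> vsupp n x" "snd k \<longleftrightarrow> fst k \<notin> A" using part1_core[OF xp pne X A] by blast
  have kJ: "k \<in> Jset n" using k by (auto simp: vsupp_def)
  define i where "i = fst k"
  have iG: "i \<in> ground n" using kJ by (simp add: Jset_mem i_def)
  define T where "T = A \<Delta> {i}"
  have TG: "T \<subseteq> ground n" using symdiff_sub[OF AG iG] by (simp add: T_def)
  have sk: "snd k \<longleftrightarrow> fst k \<in> T" using k(2) by (auto simp: T_def i_def symdiff_def)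
  have "cocvec n p T k = p (T \<Delta> {fst k})" using kJ sk by (simp add: cocvec_eq[OF TG])
  hence ck: "cocvec n p T k = p A" by (simp add: T_def i_def symdiff_twice)
  have kin: "k \<in> vsupp n (cocvec n p T)" using ck pA kJ by (simp add: vsupp_def)
  have sub: "vsupp n (cocvec n p T) \<subseteq> vsupp n x"
  proof
    fix k' assume k': "k' \<in> vsupp n (cocvec n p T)"
    have k'J: "k' \<in> Jset n" and ck': "cocvec n p T k' \<noteq> \<infinity>" using k' by (auto simp: vsupp_def)
    have sk': "snd k' \<longleftrightarrow> fst k' \<in> T" and pk': "p (T \<Delta> {fst k'}) \<noteq> \<infinity>"
      using ck' k'J by (auto simp: cocvec_eq[OF TG] split: if_splits)
    show "k' \<in> vsupp n x"
    proof (cases "fst k' = i")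
      case True
      hence "k' = k" using sk sk' i_def by (simp add: prod_eq_iff)
      thus ?thesis using k by simp
    next
      case False
      define j where "j = fst k'"
      have jG: "j \<in> ground n" using k'J by (simp add: Jset_mem j_def)
      define A' where "A' = T \<Delta> {j}"
      have A'G: "A' \<subseteq> ground n" using symdiff_sub[OF TG jG] by (simp add: A'_def)
      have A'p: "A' \<in> psupp n p" using A'G pk' by (simp add: psupp_def A'_def j_def)
      show ?thesis
      proof (rule ccontr)
        assume nk': "k' \<notin> vsupp n x"
        have "Q A' \<subseteq> Q A - {k}"
        proof
          fix m assume m: "m \<in> Q A'"
          hence mX: "m \<in> vsupp n x" and sm: "snd m \<longleftrightarrow> fst m \<notin> A'" by (auto simp: Q_def)
          show "m \<in> Q A - {k}"
          proof (cases "fst m = i")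
            case True
            hence "snd m \<longleftrightarrow> \<not> snd k" using sm k(2) False
              by (auto simp: A'_def T_def i_def j_def symdiff_def)
            hence "m = star k" using True by (simp add: prod_eq_iff star_def i_def)
            hence "vsupp n x \<inter> star ` vsupp n x \<noteq> {}" using mX k(1) by blast
            thus ?thesis using adm by (simp add: admissible_def)
          next
            case Fi: False
            show ?thesis
            proof (cases "fst m = j")
              case True
              hence "snd m \<longleftrightarrow> snd k'" using sm sk' False
                by (auto simp: A'_def T_def i_def j_def symdiff_def)
              hence "m = k'" using True by (simp add: prod_eq_iff j_def)
              thus ?thesis using mX nk' by simp
            next
              case Fj: False
              have "fst m \<in> A' \<longleftrightarrow> fst m \<in> A" using Fi Fj by (auto simp: A'_def T_def symdiff_def)
              thus ?thesis using mX sm Fi by (auto simp: Q_def i_def)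
            qed
          qed
        qed
        moreover have "k \<in> Q A" using k by (simp add: Q_def)
        ultimately have "Q A' \<subset> Q A" by blast
        hence "card (Q A') < card (Q A)" using finQ by (simp add: psubset_card_mono)
        moreover have "card (Q A) \<le> card (Q A')" using Amin A'p by blast
        ultimately show False by linarith
      qed
    qed
  qed
  have "shift (cocvec n p T) 0 \<in> cocircuits n p" using cocirc_mem[OF TG] kin by blast
  thus ?thesis using sub by (metis shift0)
qed

lemma claimB:
  assumes wick: "tropical_wick n p" and x: "x \<in> cocycles n p" and X: "vsupp n x \<noteq> {}"
    and TG: "T \<subseteq> ground n" and sub: "vsupp n x \<subseteq> vsupp n (cocvec n p T)"
  shows "\<exists>l. x = shift (cocvec n p T) l"
proof -
  have pne: "\<forall>S. S \<subseteq> ground n \<longrightarrow> p S \<noteq> -\<infinity>" using wick_pne[OF wick] .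
  have tv: "tvec n x" and orth: "\<forall>c\<in>circuits n p. trop_orth n x c"
    using x by (auto simp: cocycles_def circ_perp_def)
  have xnm: "x m \<noteq> -\<infinity>" for m using tv unfolding tvec_def by blast
  from X obtain k0 where k0: "k0 \<in> vsupp n x" by blast
  have k0J: "k0 \<in> Jset n" and xk0: "x k0 \<noteq> \<infinity>" using k0 by (auto simp: vsupp_def)
  have k0Z: "k0 \<in> vsupp n (cocvec n p T)" using k0 sub by blast
  have sk0: "snd k0 \<longleftrightarrow> fst k0 \<in> T" and ck0: "cocvec n p T k0 \<noteq> \<infinity>"
    using k0Z by (auto simp: vsupp_def cocvec_eq[OF TG] split: if_splits)
  define i where "i = fst k0"
  have iG: "i \<in> ground n" using k0J by (simp add: Jset_mem i_def)
  have ck0v: "cocvec n p T k0 = p (T \<Delta> {i})" using k0J sk0 by (simp add: cocvec_eq[OF TG] i_def)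
  have key: "x k \<noteq> \<infinity> \<and> x k0 + cocvec n p T k = x k + cocvec n p T k0"
    if kZ: "k \<in> vsupp n (cocvec n p T)" for k
  proof -
    have kJ: "k \<in> Jset n" and ck: "cocvec n p T k \<noteq> \<infinity>" using kZ by (auto simp: vsupp_def)
    have sk: "snd k \<longleftrightarrow> fst k \<in> T" using kZ by (auto simp: vsupp_def cocvec_eq[OF TG] split: if_splits)
    show ?thesis
    proof (cases "fst k = i")
      case True
      hence "k = k0" using sk sk0 by (simp add: prod_eq_iff i_def)
      thus ?thesis using xk0 by simp
    next
      case False
      define j where "j = fst k"
      have jG: "j \<in> ground n" using kJ by (simp add: Jset_mem j_def)
      have ckv: "cocvec n p T k = p (T \<Delta> {j})" using kJ sk by (simp add: cocvec_eq[OF TG] j_def)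
      define S where "S = (T \<Delta> {i}) \<Delta> {j}"
      have SG: "S \<subseteq> ground n" unfolding S_def by (rule symdiff_sub[OF symdiff_sub[OF TG iG] jG])
      have e1: "S \<Delta> {i} = T \<Delta> {j}" using False by (auto simp: S_def j_def symdiff_def)
      have e2: "S \<Delta> {j} = T \<Delta> {i}" using False by (auto simp: S_def j_def symdiff_def)
      have b0: "snd k0 \<longleftrightarrow> fst k0 \<notin> S" using sk0 False by (auto simp: S_def i_def j_def symdiff_def)
      have b1: "snd k \<longleftrightarrow> fst k \<notin> S" using sk False by (auto simp: S_def i_def j_def symdiff_def)
      have cS0: "cvec n p S k0 = cocvec n p T k" using b0 k0J e1 ckv by (simp add: cvec_eq[OF SG] i_def)
      have cS1: "cvec n p S k = cocvec n p T k0" using b1 kJ e2 ck0v by (simp add: cvec_eq[OF SG] j_def)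
      have "k0 \<in> vsupp n (cvec n p S)" using cS0 ck k0J by (simp add: vsupp_def)
      hence "cvec n p S \<in> circuits n p" using circ_mem[OF SG] by blast
      hence mt: "min_twice (\<lambda>m. x m + cvec n p S m) (Jset n)" using orth by (simp add: trop_orth_def)
      have neq: "k0 \<noteq> k" using False i_def by blast
      have cnm: "cocvec n p T m \<noteq> -\<infinity>" for m using cvec_nm(2)[OF pne TG] .
      have f0: "x k0 + cvec n p S k0 \<noteq> \<infinity>" using cS0 xk0 ck xnm cnm[of k] by simp
      have others: "\<forall>m\<in>Jset n - {k0, k}. x m + cvec n p S m = \<infinity>"
      proof
        fix m assume m: "m \<in> Jset n - {k0, k}"
        have cm: "cvec n p S m \<noteq> -\<infinity>" using cvec_nm(1)[OF pne SG] .
        show "x m + cvec n p S m = \<infinity>"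
        proof (cases "m \<in> vsupp n x")
          case True
          hence sm: "snd m \<longleftrightarrow> fst m \<in> T" using sub
            by (auto simp: vsupp_def cocvec_eq[OF TG] split: if_splits)
          have "cvec n p S m = \<infinity>"
          proof (rule ccontr)
            assume "cvec n p S m \<noteq> \<infinity>"
            hence "snd m \<longleftrightarrow> fst m \<notin> S" by (auto simp: cvec_eq[OF SG] split: if_splits)
            hence "fst m = i \<or> fst m = j" using sm by (auto simp: S_def symdiff_def split: if_splits)
            hence "m = k0 \<or> m = k" using sm sk sk0 i_def j_def by (auto simp: prod_eq_iff)
            thus False using m by blast
          qed
          thus ?thesis using xnm[of m] by simp
        next
          case False
          hence "x m = \<infinity>" using m by (auto simp: vsupp_def)
          thus ?thesis using cm by simp
        qed
      qed
      have kJ': "k \<in> Jset n" using kJ .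
      from min_twice_two[OF mt k0J kJ' neq f0 others]
      have r: "x k + cvec n p S k \<noteq> \<infinity>" "x k0 + cvec n p S k0 = x k + cvec n p S k" by auto
      have "x k \<noteq> \<infinity>" using r(1) cnm[of k0] cS1 by auto
      thus ?thesis using r(2) cS0 cS1 by simp
    qed
  qed
  define l where "l = real_of_ereal (x k0) - real_of_ereal (cocvec n p T k0)"
  have "x = shift (cocvec n p T) l"
  proof
    fix k
    show "x k = shift (cocvec n p T) l k"
    proof (cases "k \<in> vsupp n (cocvec n p T)")
      case True
      have h: "x k \<noteq> \<infinity>" "x k0 + cocvec n p T k = x k + cocvec n p T k0" using key[OF True] by auto
      have c1: "cocvec n p T k \<noteq> \<infinity>" using True by (simp add: vsupp_def)
      have c2: "cocvec n p T k \<noteq> -\<infinity>" "cocvec n p T k0 \<noteq> -\<infinity>" using cvec_nm(2)[OF pne TG] by auto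
      obtain a where a: "x k = ereal a" using h(1) xnm[of k] by (cases "x k") auto
      obtain b where b: "x k0 = ereal b" using xk0 xnm[of k0] by (cases "x k0") auto
      obtain c where c: "cocvec n p T k = ereal c" using c1 c2(1) by (cases "cocvec n p T k") auto
      obtain d where d: "cocvec n p T k0 = ereal d" using ck0 c2(2) by (cases "cocvec n p T k0") auto
      have "b + c = a + d" using h(2) a b c d by simp
      thus ?thesis unfolding shift_def l_def using a b c d by simp
    next
      case False
      have c: "cocvec n p T k = \<infinity>" using False by (auto simp: vsupp_def cocvec_eq[OF TG])
      have "x k = \<infinity>"
      proof (cases "k \<in> Jset n")
        case True then show ?thesis using False sub by (auto simp: vsupp_def)
      next
        case False then show ?thesis using tv unfolding tvec_def by blast
      qed
      then show ?thesis using c by (simp add: shift_def)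
    qed
  qed
  thus ?thesis by blast
qed

theorem proposition6p6:
  fixes n :: nat and p :: "nat set \<Rightarrow> ereal"
  assumes wick: "tropical_wick n p"
    and nonempty: "psupp n p \<noteq> {}"
  shows "(\<forall>x \<in> circ_perp n p. vsupp n x \<noteq> {} \<longrightarrow>
            dependent_in n (dual_bases n (psupp n p)) (vsupp n x))
       \<and> {x \<in> cocycles n p. vsupp n x \<noteq> {} \<and>
            (\<forall>y \<in> cocycles n p. vsupp n y \<noteq> {} \<longrightarrow> \<not> vsupp n y \<subset> vsupp n x)}
           = cocircuits n p
       \<and> (\<forall>c1 \<in> cocircuits n p. \<forall>c2 \<in> cocircuits n p.
            vsupp n c1 = vsupp n c2 \<longrightarrow> (\<exists>l::real. c1 = shift c2 l))"
proof -
  have pne: "\<forall>S. S \<subseteq> ground n \<longrightarrow> p S \<noteq> -\<infinity>" using wick_pne[OF wick] .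
  have B': "\<exists>l. x = shift c l" if x: "x \<in> cocycles n p" "vsupp n x \<noteq> {}"
    and c: "c \<in> cocircuits n p" and sub: "vsupp n x \<subseteq> vsupp n c" for x c
  proof -
    obtain T l0 where T: "T \<subseteq> ground n" and cd: "c = shift (cocvec n p T) l0"
      using c unfolding cocircuits_def by blast
    have "vsupp n x \<subseteq> vsupp n (cocvec n p T)" using sub cd by (simp add: vsupp_shift)
    then obtain l where "x = shift (cocvec n p T) l" using claimB[OF wick x T] by blast
    hence "x = shift c (l - l0)" by (simp add: cd shift_shift)
    thus ?thesis by blast
  qed
  have cne: "vsupp n c \<noteq> {}" if "c \<in> cocircuits n p" for c
    using that unfolding cocircuits_def by blast
  have P1: "\<forall>x \<in> circ_perp n p. vsupp n x \<noteq> {} \<longrightarrow>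
            dependent_in n (dual_bases n (psupp n p)) (vsupp n x)"
    using part1[OF _ pne] by blast
  have P2: "{x \<in> cocycles n p. vsupp n x \<noteq> {} \<and>
            (\<forall>y \<in> cocycles n p. vsupp n y \<noteq> {} \<longrightarrow> \<not> vsupp n y \<subset> vsupp n x)}
           = cocircuits n p"
  proof
    show "{x \<in> cocycles n p. vsupp n x \<noteq> {} \<and>
            (\<forall>y \<in> cocycles n p. vsupp n y \<noteq> {} \<longrightarrow> \<not> vsupp n y \<subset> vsupp n x)}
           \<subseteq> cocircuits n p"
    proof
      fix x assume "x \<in> {x \<in> cocycles n p. vsupp n x \<noteq> {} \<and>
            (\<forall>y \<in> cocycles n p. vsupp n y \<noteq> {} \<longrightarrow> \<not> vsupp n y \<subset> vsupp n x)}"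
      hence x: "x \<in> cocycles n p" "vsupp n x \<noteq> {}"
        and mn: "\<forall>y \<in> cocycles n p. vsupp n y \<noteq> {} \<longrightarrow> \<not> vsupp n y \<subset> vsupp n x" by auto
      obtain c where c: "c \<in> cocircuits n p" "vsupp n c \<subseteq> vsupp n x"
        using claimA[OF wick nonempty x] by blast
      have "vsupp n c = vsupp n x" using mn coc_cocycle[OF wick c(1)] cne[OF c(1)] c(2) by blast
      then obtain l where l: "x = shift c l" using B'[OF x c(1)] by blast
      obtain T l0 where T: "T \<subseteq> ground n" and cd: "c = shift (cocvec n p T) l0"
        using c(1) unfolding cocircuits_def by blast
      have "x = shift (cocvec n p T) (l0 + l)" using l cd by (simp add: shift_shift)
      moreover have "vsupp n (cocvec n p T) \<noteq> {}" using cne[OF c(1)] cd by (simp add: vsupp_shift)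
      ultimately show "x \<in> cocircuits n p" using cocirc_mem[OF T] by blast
    qed
  next
    show "cocircuits n p \<subseteq> {x \<in> cocycles n p. vsupp n x \<noteq> {} \<and>
            (\<forall>y \<in> cocycles n p. vsupp n y \<noteq> {} \<longrightarrow> \<not> vsupp n y \<subset> vsupp n x)}"
    proof
      fix c assume c: "c \<in> cocircuits n p"
      have "\<forall>y \<in> cocycles n p. vsupp n y \<noteq> {} \<longrightarrow> \<not> vsupp n y \<subset> vsupp n c"
      proof (intro ballI impI notI)
        fix y assume y: "y \<in> cocycles n p" "vsupp n y \<noteq> {}" and ps: "vsupp n y \<subset> vsupp n c"
        then obtain l where "y = shift c l" using B'[OF y c] by blast
        hence "vsupp n y = vsupp n c" by (simp add: vsupp_shift)
        thus False using ps by blast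
      qed
      thus "c \<in> {x \<in> cocycles n p. vsupp n x \<noteq> {} \<and>
            (\<forall>y \<in> cocycles n p. vsupp n y \<noteq> {} \<longrightarrow> \<not> vsupp n y \<subset> vsupp n x)}"
        using coc_cocycle[OF wick c] cne[OF c] by blast
    qed
  qed
  have P3: "\<forall>c1 \<in> cocircuits n p. \<forall>c2 \<in> cocircuits n p.
            vsupp n c1 = vsupp n c2 \<longrightarrow> (\<exists>l::real. c1 = shift c2 l)"
  proof (intro ballI impI)
    fix c1 c2 assume c1: "c1 \<in> cocircuits n p" and c2: "c2 \<in> cocircuits n p" and e: "vsupp n c1 = vsupp n c2"
    show "\<exists>l::real. c1 = shift c2 l"
      using B'[OF coc_cocycle[OF wick c1] cne[OF c1] c2] e by blast
  qed
  show ?thesis using P1 P2 P3 by (intro conjI)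
qed

end
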